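(* Fix $q\ge 2$ and a positive integer $d$. There exists a constant $C>0$ such that for all sufficiently large $n$ and all $k$ with $d\le k\le n$, $$a_q(n,k,d)\le q^{\,n-C\frac{(n-2k)k^{d-1}}{q^k}}.$$
   Context: $\Sigma_q=\{0,\dots,q-1\}$, $w_H$ is Hamming weight. A vector $\vec a\in\Sigma_q^n$ is a $(d,k)$-window weight limited (WWL) vector if $n<k$ or $w_H(a_i,\dots,a_{i+k-1})\ge d$ for all $i\in[1,n-k+1]$. $a_q(n,k,d)$ is the number of $(d,k)$-WWL vectors in $\Sigma_q^n$. *)

theory Defs
  imports Complex_Main
begin

definition hamming_weight :: "nat list \<Rightarrow> nat" where
  "hamming_weight xs = length (filter (\<lambda>x. x \<noteq> 0) xs)"

text \<open>(d,k)-window weight limited vector. Windows are indexed from 0: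
  the window starting at position i (0-based) is take k (drop i a),
  for i = 0 .. n-k (i.e. i < n - k + 1).\<close>
definition wwl :: "nat \<Rightarrow> nat \<Rightarrow> nat list \<Rightarrow> bool" where
  "wwl d k a \<longleftrightarrow> length a < k \<or>
     (\<forall>i < length a - k + 1. hamming_weight (take k (drop i a)) \<ge> d)"

definition a_q :: "nat \<Rightarrow> nat \<Rightarrow> nat \<Rightarrow> nat \<Rightarrow> nat" where
  "a_q q n k d = card {a :: nat list. length a = n \<and> set a \<subseteq> {..<q} \<and> wwl d k a}"

end

theory Submission
  imports Defs
begin


definition Aset :: "nat \<Rightarrow> nat \<Rightarrow> nat \<Rightarrow> nat \<Rightarrow> nat list set" where
  "Aset q n k d = {a :: nat list. length a = n \<and> set a \<subseteq> {..<q} \<and> wwl d k a}"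

lemma a_q_Aset: "a_q q n k d = card (Aset q n k d)"
  by (simp add: a_q_def Aset_def)

lemma finite_Aset: "finite (Aset q n k d)"
  by (rule finite_subset[OF _ finite_lists_length_eq[OF finite_lessThan[of q], of n]])
     (auto simp: Aset_def)

lemma card_Aset_le: "card (Aset q n k d) \<le> q ^ n"
proof -
  have "card (Aset q n k d) \<le> card {xs. set xs \<subseteq> {..<q} \<and> length xs = n}"
    by (rule card_mono[OF finite_lists_length_eq[OF finite_lessThan]]) (auto simp: Aset_def)
  thus ?thesis by (simp add: card_lists_length_eq)
qed

lemma wwl_take: assumes "wwl d k a" shows "wwl d k (take B a)"
proof (cases "length (take B a) < k")
  case True thus ?thesis by (simp add: wwl_def)
next
  case False
  hence "length a \<ge> k" by simp
  hence W: "\<forall>i < length a - k + 1. hamming_weight (take k (drop i a)) \<ge> d" using assms by (auto simp: wwl_def)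
  show ?thesis unfolding wwl_def
  proof (intro disjI2 allI impI)
    fix i assume i: "i < length (take B a) - k + 1"
    have ik: "i + k \<le> B" using i False by (simp split: if_splits)
    have "take k (drop i (take B a)) = take k (drop i a)"
      using ik by (simp add: take_drop min_def)
    moreover have "i < length a - k + 1" using i False by auto
    ultimately show "hamming_weight (take k (drop i (take B a))) \<ge> d" using W by simp
  qed
qed

lemma wwl_drop: assumes "wwl d k a" "0 < k" shows "wwl d k (drop B a)"
proof (cases "length (drop B a) < k")
  case True thus ?thesis by (simp add: wwl_def)
next
  case False
  hence "length a \<ge> k" by simp
  hence W: "\<forall>i < length a - k + 1. hamming_weight (take k (drop i a)) \<ge> d" using assms by (auto simp: wwl_def)
  show ?thesis unfolding wwl_def
  proof (intro disjI2 allI impI)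
    fix i assume i: "i < length (drop B a) - k + 1"
    have "take k (drop i (drop B a)) = take k (drop (B+i) a)" by (simp add: add.commute)
    moreover have "B + i < length a - k + 1" using i False using assms(2) by (simp only: length_drop)
    ultimately show "hamming_weight (take k (drop i (drop B a))) \<ge> d" using W by simp
  qed
qed

lemma card_Aset_add: "0 < k \<Longrightarrow> card (Aset q (B + n) k d) \<le> card (Aset q B k d) * card (Aset q n k d)"
proof -
  assume k: "0 < k"
  have "card (Aset q (B + n) k d) \<le> card (Aset q B k d \<times> Aset q n k d)"
  proof (rule card_inj_on_le[where f = "\<lambda>a. (take B a, drop B a)"])
    show "inj_on (\<lambda>a. (take B a, drop B a)) (Aset q (B + n) k d)"
      by (rule inj_onI) (metis append_take_drop_id prod.inject)
    show "(\<lambda>a. (take B a, drop B a)) ` Aset q (B + n) k d \<subseteq> Aset q B k d \<times> Aset q n k d"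
      using k by (auto simp: Aset_def wwl_take wwl_drop dest: in_set_takeD in_set_dropD)
    show "finite (Aset q B k d \<times> Aset q n k d)" by (simp add: finite_Aset)
  qed
  thus ?thesis by (simp add: card_cartesian_product)
qed

lemma card_Aset_blocks: "0 < k \<Longrightarrow> card (Aset q (B * m + r) k d) \<le> card (Aset q B k d) ^ m * q ^ r"
proof (induction m)
  case 0 thus ?case using card_Aset_le by simp
next
  case (Suc m)
  have "card (Aset q (B * Suc m + r) k d) = card (Aset q (B + (B*m + r)) k d)" by (simp add: algebra_simps)
  also have "\<dots> \<le> card (Aset q B k d) * card (Aset q (B*m + r) k d)" using Suc.prems by (rule card_Aset_add)
  also have "\<dots> \<le> card (Aset q B k d) * (card (Aset q B k d) ^ m * q ^ r)"
    using Suc by (intro mult_left_mono) simp_all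
  finally show ?case by (simp add: algebra_simps)
qed



lemma card_lists_pointwise:
  assumes "\<And>i. finite (F i)"
  shows "card {xs :: 'a list. length xs = n \<and> (\<forall>i<n. xs!i \<in> F i)} = (\<Prod>i<n. card (F i))"
  and "finite {xs :: 'a list. length xs = n \<and> (\<forall>i<n. xs!i \<in> F i)}"
proof -
  have "card {xs :: 'a list. length xs = n \<and> (\<forall>i<n. xs!i \<in> F i)} = (\<Prod>i<n. card (F i)) \<and>
        finite {xs :: 'a list. length xs = n \<and> (\<forall>i<n. xs!i \<in> F i)}"
  proof (induction n)
    case 0
    have "{xs :: 'a list. length xs = 0 \<and> (\<forall>i<0. xs!i \<in> F i)} = {[]}" by auto
    thus ?case by simp
  next
    case (Suc n)
    let ?X = "{xs :: 'a list. length xs = n \<and> (\<forall>i<n. xs!i \<in> F i)}"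
    have eq: "{xs :: 'a list. length xs = Suc n \<and> (\<forall>i<Suc n. xs!i \<in> F i)} =
          (\<lambda>(xs,x). xs @ [x]) ` (?X \<times> F n)"
    proof (rule set_eqI, rule iffI)
      fix ys assume ys: "ys \<in> {xs :: 'a list. length xs = Suc n \<and> (\<forall>i<Suc n. xs!i \<in> F i)}"
      then obtain xs x where yx: "ys = xs @ [x]"
        using ys by (auto simp: length_Suc_conv_rev)
      have "length xs = n" using ys yx by simp
      moreover have "\<forall>i<n. xs!i \<in> F i"
      proof (intro allI impI)
        fix i assume "i < n"
        hence "ys ! i = xs ! i" using yx \<open>length xs = n\<close> by (simp add: nth_append)
        moreover have "ys ! i \<in> F i" using ys \<open>i < n\<close> by simp
        ultimately show "xs ! i \<in> F i" by simp
      qed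
      moreover have "x \<in> F n"
      proof -
        have "ys ! n = x" using yx \<open>length xs = n\<close> by (simp add: nth_append)
        moreover have "ys ! n \<in> F n" using ys by simp
        ultimately show ?thesis by simp
      qed
      ultimately show "ys \<in> (\<lambda>(xs,x). xs @ [x]) ` (?X \<times> F n)" using yx by auto
    next
      fix ys assume "ys \<in> (\<lambda>(xs,x). xs @ [x]) ` (?X \<times> F n)"
      then obtain xs x where yx: "ys = xs @ [x]" and xs: "xs \<in> ?X" and x: "x \<in> F n" by auto
      have "\<forall>i<Suc n. ys!i \<in> F i"
      proof (intro allI impI)
        fix i assume "i < Suc n"
        then consider "i < n" | "i = n" by linarith
        thus "ys ! i \<in> F i"
        proof cases
          case 1 thus ?thesis using xs yx by (simp add: nth_append)
        next
          case 2 thus ?thesis using xs yx x by (simp add: nth_append)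
        qed
      qed
      then show "ys \<in> {xs :: 'a list. length xs = Suc n \<and> (\<forall>i<Suc n. xs!i \<in> F i)}"
        using xs yx by simp
    qed
    have inj: "inj_on (\<lambda>(xs,x). xs @ [x]) (?X \<times> F n)"
      by (rule inj_onI) auto
    show ?case unfolding eq using Suc.IH assms
      by (simp add: card_image[OF inj] card_cartesian_product)
  qed
  thus "card {xs :: 'a list. length xs = n \<and> (\<forall>i<n. xs!i \<in> F i)} = (\<Prod>i<n. card (F i))"
   and "finite {xs :: 'a list. length xs = n \<and> (\<forall>i<n. xs!i \<in> F i)}" by auto
qed



definition Fs :: "nat \<Rightarrow> nat \<Rightarrow> nat \<Rightarrow> nat set \<Rightarrow> nat \<Rightarrow> nat set" where
  "Fs q k j S i = (if i = j then {1..<q} else if j < i \<and> i < k then {0}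
     else if k \<le> i \<and> i \<le> j + k then (if i \<in> S then {1} else {0}) else {..<q})"

definition Es :: "nat \<Rightarrow> nat \<Rightarrow> nat \<Rightarrow> nat set \<Rightarrow> nat list set" where
  "Es q k j S = {xs. length xs = 2*k \<and> (\<forall>i<2*k. xs!i \<in> Fs q k j S i)}"

lemma finite_Fs: "finite (Fs q k j S i)" by (simp add: Fs_def)

lemma card_Es:
  assumes "j < k"
  shows "card (Es q k j S) = (q - 1) * q ^ (k - 1)" and "finite (Es q k j S)"
proof -
  let ?g = "\<lambda>i. card (Fs q k j S i)"
  define Fr where "Fr = {..<j} \<union> {j+k+1..<2*k}"
  have Fr_sub: "Fr \<subseteq> {..<2*k}" using assms by (auto simp: Fr_def)
  have cFr: "card Fr = k - 1"
  proof -
    have "card Fr = card {..<j} + card {j+k+1..<2*k}" unfolding Fr_def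
      by (rule card_Un_disjoint) auto
    thus ?thesis using assms by simp
  qed
  have pFr: "(\<Prod>i\<in>Fr. ?g i) = q ^ (k - 1)"
  proof -
    have "(\<Prod>i\<in>Fr. ?g i) = (\<Prod>i\<in>Fr. q)"
    proof (rule prod.cong[OF refl])
      fix i assume "i \<in> Fr"
      hence "i < j \<or> j + k < i" by (auto simp: Fr_def)
      hence "Fs q k j S i = {..<q}" using assms unfolding Fs_def by auto
      thus "?g i = q" by simp
    qed
    thus ?thesis using cFr by simp
  qed
  have jin: "j \<in> {..<2*k} - Fr" using assms by (auto simp: Fr_def)
  have rest: "(\<Prod>i\<in>({..<2*k} - Fr) - {j}. ?g i) = 1"
  proof (rule prod.neutral, rule ballI)
    fix i assume "i \<in> ({..<2*k} - Fr) - {j}"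
    hence "i < 2*k" "\<not> i < j" "i \<noteq> j" "\<not> (j+k+1 \<le> i \<and> i < 2*k)"
      unfolding Fr_def by auto
    hence i: "j < i" "i \<le> j + k" by linarith+
    show "?g i = 1"
    proof (cases "i < k")
      case True thus ?thesis using i by (simp add: Fs_def)
    next
      case False thus ?thesis using i by (simp add: Fs_def)
    qed
  qed
  have "(\<Prod>i<2*k. ?g i) = (\<Prod>i\<in>{..<2*k} - Fr. ?g i) * (\<Prod>i\<in>Fr. ?g i)"
    by (rule prod.subset_diff[OF Fr_sub]) simp
  also have "(\<Prod>i\<in>{..<2*k} - Fr. ?g i) = ?g j * (\<Prod>i\<in>({..<2*k} - Fr) - {j}. ?g i)"
    by (rule prod.remove[OF _ jin]) simp
  also have "?g j = q - 1" by (simp add: Fs_def)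
  finally have "(\<Prod>i<2*k. ?g i) = (q - 1) * q ^ (k - 1)" using rest pFr by simp
  moreover have "card (Es q k j S) = (\<Prod>i<2*k. ?g i)"
    unfolding Es_def by (rule card_lists_pointwise(1)[OF finite_Fs])
  ultimately show "card (Es q k j S) = (q - 1) * q ^ (k - 1)" by simp
  show "finite (Es q k j S)" unfolding Es_def by (rule card_lists_pointwise(2)[OF finite_Fs])
qed



lemma hw_window:
  assumes "i + k \<le> length a"
  shows "hamming_weight (take k (drop i a)) = card {t. t < k \<and> a!(i+t) \<noteq> 0}"
proof -
  have "hamming_weight (take k (drop i a)) =
      card {t. t < length (take k (drop i a)) \<and> (take k (drop i a))!t \<noteq> 0}"
    unfolding hamming_weight_def by (rule length_filter_conv_card)
  also have "{t. t < length (take k (drop i a)) \<and> (take k (drop i a))!t \<noteq> 0} =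
             {t. t < k \<and> a!(i+t) \<noteq> 0}"
    using assms by auto
  finally show ?thesis .
qed

lemma Es_bad:
  assumes jk: "j < k" and S: "S \<subseteq> {k..j+k}" and cS: "card S = d - 1" and d: "0 < d"
    and a: "a \<in> Es q k j S"
  shows "\<not> wwl d k a"
proof
  assume w: "wwl d k a"
  have len: "length a = 2*k" using a by (simp add: Es_def)
  have F: "\<And>x. x < 2*k \<Longrightarrow> a!x \<in> Fs q k j S x" using a by (simp add: Es_def)
  have "\<not> length a < k" using len by simp
  hence W: "hamming_weight (take k (drop (j+1) a)) \<ge> d" using w len jk by (simp add: wwl_def)
  have "hamming_weight (take k (drop (j+1) a)) = card {t. t < k \<and> a!(j+1+t) \<noteq> 0}"
    using len jk by (intro hw_window) simp
  also have "\<dots> = card ((\<lambda>t. j+1+t) ` {t. t < k \<and> a!(j+1+t) \<noteq> 0})"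
    by (rule card_image[symmetric]) (simp add: inj_on_def)
  also have "(\<lambda>t. j+1+t) ` {t. t < k \<and> a!(j+1+t) \<noteq> 0} = S"
  proof (rule set_eqI, rule iffI)
    fix x assume "x \<in> (\<lambda>t. j+1+t) ` {t. t < k \<and> a!(j+1+t) \<noteq> 0}"
    then obtain t where t: "t < k" "a!x \<noteq> 0" "x = j+1+t" by auto
    have "x < 2*k" using t jk by simp
    hence Fx: "a!x \<in> Fs q k j S x" by (rule F)
    show "x \<in> S"
    proof (rule ccontr)
      assume "x \<notin> S"
      have "x \<noteq> j" using t by simp
      moreover have "(j < x \<and> x < k) \<or> (k \<le> x \<and> x \<le> j + k)" using t by linarith
      ultimately have "Fs q k j S x = {0}" using \<open>x \<notin> S\<close> unfolding Fs_def by auto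
      thus False using Fx t by simp
    qed
  next
    fix x assume xS: "x \<in> S"
    hence x: "k \<le> x" "x \<le> j + k" using S by auto
    have "x < 2*k" using x jk by simp
    hence Fx: "a!x \<in> Fs q k j S x" by (rule F)
    have "Fs q k j S x = {1}" using x xS jk unfolding Fs_def by auto
    hence "a!x \<noteq> 0" using Fx by simp
    moreover have "x - (j+1) < k" using x jk by linarith
    moreover have "x = j + 1 + (x - (j+1))" using x jk by linarith
    ultimately show "x \<in> (\<lambda>t. j+1+t) ` {t. t < k \<and> a!(j+1+t) \<noteq> 0}"
      by (metis (mono_tags, lifting) image_eqI mem_Collect_eq)
  qed
  finally have "hamming_weight (take k (drop (j+1) a)) = d - 1" using cS by simp
  thus False using W d by simp
qed

lemma Es_disj_lt:
  assumes "j < j'" "j' < k" "a \<in> Es q k j S" "a \<in> Es q k j' S'"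
  shows False
proof -
  have "j' < 2*k" using assms by simp
  hence "a!j' \<in> Fs q k j S j'" "a!j' \<in> Fs q k j' S' j'" using assms(3,4) by (auto simp: Es_def)
  moreover have "Fs q k j S j' = {0}" using assms(1,2) by (simp add: Fs_def)
  moreover have "Fs q k j' S' j' = {1..<q}" by (simp add: Fs_def)
  ultimately show False by simp
qed

lemma Es_disj_eq:
  assumes "j < k" "S \<subseteq> {k..j+k}" "a \<in> Es q k j S" "a \<in> Es q k j S'"
  shows "S \<subseteq> S'"
proof
  fix x assume xS: "x \<in> S"
  hence x: "k \<le> x" "x \<le> j + k" using assms(2) by auto
  have "x < 2*k" using x assms(1) by simp
  hence F: "a!x \<in> Fs q k j S x" "a!x \<in> Fs q k j S' x" using assms(3,4) by (auto simp: Es_def)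
  have "Fs q k j S x = {1}" using x xS assms(1) unfolding Fs_def by auto
  show "x \<in> S'"
  proof (rule ccontr)
    assume "x \<notin> S'"
    hence "Fs q k j S' x = {0}" using x assms(1) unfolding Fs_def by auto
    thus False using F \<open>Fs q k j S x = {1}\<close> by simp
  qed
qed



definition Ix :: "nat \<Rightarrow> nat \<Rightarrow> (nat \<times> nat set) set" where
  "Ix k d = (SIGMA j:{..<k}. {S. S \<subseteq> {k..j+k} \<and> card S = d - 1})"

lemma finS: "finite {S. S \<subseteq> {k..j+(k::nat)} \<and> card S = (d::nat) - 1}"
  by (rule finite_subset[where B = "Pow {k..j+k}"]) auto

lemma finite_Ix: "finite (Ix k d)"
  unfolding Ix_def by (intro finite_SigmaI finite_lessThan finS)

lemma choose_mono_n: "(j choose m) \<le> (Suc j choose m)"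
  by (cases m) auto

lemma card_Ix: assumes "0 < k" shows "k choose d \<le> card (Ix k d)"
proof -
  have "card (Ix k d) = (\<Sum>j<k. card {S. S \<subseteq> {k..j+k} \<and> card S = d - 1})"
    unfolding Ix_def by (intro card_SigmaI finite_lessThan ballI finS)
  also have "\<dots> = (\<Sum>j<k. Suc j choose (d - 1))"
  proof (rule sum.cong[OF refl])
    fix j
    have "card {S. S \<subseteq> {k..j+k} \<and> card S = d - 1} = card {k..j+k} choose (d - 1)"
      by (rule n_subsets) simp
    thus "card {S. S \<subseteq> {k..j+k} \<and> card S = d - 1} = Suc j choose (d - 1)" by simp
  qed
  finally have 1: "card (Ix k d) = (\<Sum>j<k. Suc j choose (d - 1))" .
  have 2: "(\<Sum>j<k. j choose (d - 1)) \<le> (\<Sum>j<k. Suc j choose (d - 1))"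
    by (rule sum_mono) (rule choose_mono_n)
  have "{..<k} = {..k-1}" using assms by auto
  hence 3: "(\<Sum>j<k. j choose (d - 1)) = Suc (k-1) choose Suc (d-1)"
    by (simp only: sum_choose_upper)
  have 4: "Suc (k-1) choose Suc (d-1) \<ge> k choose d"
    using assms by (cases d) simp_all
  show ?thesis using 1 2 3 4 by linarith
qed



lemma bad_count:
  assumes q: "2 \<le> q" and d: "0 < d" and k: "0 < k"
  shows "card (Aset q (2*k) k d) + card (Ix k d) * ((q - 1) * q ^ (k - 1)) \<le> q ^ (2*k)"
proof -
  let ?E = "\<lambda>p. Es q k (fst p) (snd p)"
  let ?U = "\<Union>(?E ` Ix k d)"
  have IxE: "\<And>p. p \<in> Ix k d \<Longrightarrow> fst p < k \<and> snd p \<subseteq> {k..fst p + k} \<and> card (snd p) = d - 1"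
    by (auto simp: Ix_def)
  have cU: "card ?U = (\<Sum>p\<in>Ix k d. card (?E p))"
  proof (rule card_UN_disjoint[OF finite_Ix])
    show "\<forall>p\<in>Ix k d. finite (?E p)" using IxE card_Es(2) by blast
    show "\<forall>p\<in>Ix k d. \<forall>p'\<in>Ix k d. p \<noteq> p' \<longrightarrow> ?E p \<inter> ?E p' = {}"
    proof (intro ballI impI)
      fix p p' assume p: "p \<in> Ix k d" and p': "p' \<in> Ix k d" and ne: "p \<noteq> p'"
      obtain j S where pj: "p = (j, S)" by (cases p)
      obtain j' S' where pj': "p' = (j', S')" by (cases p')
      have hp: "j < k" "S \<subseteq> {k..j+k}" using IxE[OF p] pj by auto
      have hp': "j' < k" "S' \<subseteq> {k..j'+k}" using IxE[OF p'] pj' by auto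
      show "?E p \<inter> ?E p' = {}"
      proof (rule ccontr)
        assume "?E p \<inter> ?E p' \<noteq> {}"
        then obtain a where a: "a \<in> Es q k j S" "a \<in> Es q k j' S'" using pj pj' by auto
        consider "j < j'" | "j' < j" | "j = j'" by linarith
        thus False
        proof cases
          case 1 show False by (rule Es_disj_lt[OF 1 hp'(1) a(1) a(2)])
        next
          case 2 show False by (rule Es_disj_lt[OF 2 hp(1) a(2) a(1)])
        next
          case 3
          have "S \<subseteq> S'" using Es_disj_eq[OF hp(1) hp(2) a(1)] a(2) 3 by simp
          moreover have "S' \<subseteq> S" using Es_disj_eq[OF hp'(1) hp'(2) a(2)] a(1) 3 by simp
          ultimately show False using ne pj pj' 3 by simp
        qed
      qed
    qed
  qed
  also have "\<dots> = (\<Sum>p\<in>Ix k d. (q - 1) * q ^ (k - 1))"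
    by (rule sum.cong[OF refl]) (use IxE card_Es(1) in blast)
  finally have cU': "card ?U = card (Ix k d) * ((q - 1) * q ^ (k - 1))" by simp
  have disj: "Aset q (2*k) k d \<inter> ?U = {}"
  proof (rule ccontr)
    assume "Aset q (2*k) k d \<inter> ?U \<noteq> {}"
    then obtain a p where a: "a \<in> Aset q (2*k) k d" "p \<in> Ix k d" "a \<in> ?E p" by auto
    have "\<not> wwl d k a" using IxE[OF a(2)] d a(3) Es_bad by blast
    thus False using a(1) by (simp add: Aset_def)
  qed
  let ?L = "{xs. set xs \<subseteq> {..<q} \<and> length xs = 2*k}"
  have sub: "Aset q (2*k) k d \<union> ?U \<subseteq> ?L"
  proof
    fix a assume "a \<in> Aset q (2*k) k d \<union> ?U"
    thus "a \<in> ?L"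
    proof
      assume "a \<in> Aset q (2*k) k d" thus ?thesis by (simp add: Aset_def)
    next
      assume "a \<in> ?U"
      then obtain p where "a \<in> ?E p" by auto
      hence len: "length a = 2*k" and F: "\<forall>i<2*k. a!i \<in> Fs q k (fst p) (snd p) i"
        by (auto simp: Es_def)
      have "\<forall>i<2*k. a!i < q"
      proof (intro allI impI)
        fix i assume "i < 2*k"
        hence "a!i \<in> Fs q k (fst p) (snd p) i" using F by simp
        thus "a!i < q" using q unfolding Fs_def by (auto split: if_splits)
      qed
      hence "set a \<subseteq> {..<q}" using len by (auto simp: in_set_conv_nth)
      thus ?thesis using len by simp
    qed
  qed
  have fA: "finite (Aset q (2*k) k d)" by (rule finite_Aset)
  have fU: "finite ?U" using finite_Ix IxE card_Es(2) by blast
  have "card (Aset q (2*k) k d) + card ?U = card (Aset q (2*k) k d \<union> ?U)"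
    by (rule card_Un_disjoint[symmetric, OF fA fU disj])
  also have "\<dots> \<le> card ?L" by (rule card_mono[OF finite_lists_length_eq[OF finite_lessThan] sub])
  also have "\<dots> = q ^ (2*k)" by (simp add: card_lists_length_eq)
  finally show ?thesis using cU' by simp
qed



lemma exponent_ineq:
  fixes Q K M nr D P :: real and d :: nat
  assumes Q: "Q \<ge> 2" and K: "K \<ge> 1" and D: "D > 0" and M: "M \<ge> 0"
    and KM: "nr - 2*K \<le> 2*K*M"
    and P: "(K/D)^d * (Q - 1) * Q^(k-1) \<le> P" and k: "k \<ge> 1"
    and d: "d \<ge> 1"
  shows "(nr - 2*K) * K^(d-1) / (4 * D^d * Q^k) \<le> P * M / Q^(2*k)"
proof (cases "nr - 2*K \<le> 0")
  case True
  have "(nr - 2*K) * K^(d-1) \<le> 0" using True K by (simp add: mult_nonpos_nonneg)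
  hence "(nr - 2*K) * K^(d-1) / (4 * D^d * Q^k) \<le> 0" using D Q by (simp add: divide_nonpos_pos)
  moreover have "P * M / Q^(2*k) \<ge> 0"
  proof -
    have "(K/D)^d * (Q - 1) * Q^(k-1) \<ge> 0" using K D Q by simp
    hence "P \<ge> 0" using P by linarith
    thus ?thesis using M Q by simp
  qed
  ultimately show ?thesis by linarith
next
  case False
  have Qk: "Q^k = Q * Q^(k-1)" using k by (metis Suc_diff_1 less_le_trans zero_less_one power_Suc)
  have Q2k: "Q^(2*k) = Q^k * Q^k" by (simp add: mult_2 power_add)
  have Qpos: "Q^k > 0" using Q by simp
  have "(K/D)^d * (Q - 1) * Q^(k-1) \<ge> (K/D)^d * (Q/2) * Q^(k-1)"
    using Q K D by (intro mult_right_mono mult_left_mono) simp_all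
  also have "(K/D)^d * (Q/2) * Q^(k-1) = K^d / D^d * Q^k / 2"
    using Qk by (simp add: power_divide field_simps)
  finally have P2: "P \<ge> K^d / D^d * Q^k / 2" using P by linarith
  have Kd: "K^d = K^(d-1) * K" using d by (metis Suc_diff_1 less_le_trans zero_less_one power_Suc2)
  have KM2: "K * M \<ge> (nr - 2*K) / 2" using KM by simp
  have "K^(d-1) * (K * M) \<ge> K^(d-1) * ((nr - 2*K) / 2)"
    using KM2 K by (intro mult_left_mono) simp_all
  hence KdM: "K^d * M \<ge> K^(d-1) * (nr - 2*K) / 2" using Kd by (simp add: mult.assoc)
  have "(nr - 2*K) * K^(d-1) / (4 * D^d * Q^k) = (K^(d-1) * (nr - 2*K) / 2) / (2 * D^d * Q^k)"
    by (simp add: field_simps)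
  also have "\<dots> \<le> (K^d * M) / (2 * D^d * Q^k)"
    using KdM Qpos D by (intro divide_right_mono) simp_all
  also have "(K^d * M) / (2 * D^d * Q^k) = (K^d / D^d * Q^k / 2) * M / Q^(2*k)"
    using Q2k Qpos D by (simp add: field_simps)
  also have "\<dots> \<le> P * M / Q^(2*k)"
    using P2 M Q by (intro divide_right_mono mult_right_mono) simp_all
  finally show ?thesis .
qed



theorem lemma7:
  fixes q d :: nat
  assumes "q \<ge> 2" and "d > 0"
  shows "\<exists>C > (0::real). \<exists>N. \<forall>n \<ge> N. \<forall>k. d \<le> k \<and> k \<le> n \<longrightarrow>
           real (a_q q n k d)
             \<le> real q powr (real n - C * ((real n - 2 * real k) * real k ^ (d - 1)) / real q ^ k)"
proof -
  define Q where "Q = real q"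
  have Q2: "Q \<ge> 2" using assms(1) by (simp add: Q_def)
  have lnQ: "ln Q > 0" using Q2 by simp
  define C where "C = 1 / (4 * real d ^ d * ln Q)"
  have Cpos: "C > 0" using lnQ assms(2) by (simp add: C_def)
  show ?thesis
  proof (intro exI[of _ C] conjI Cpos exI[of _ 0] allI impI)
    fix n k assume nk: "d \<le> k \<and> k \<le> n"
    have k0: "0 < k" using nk assms(2) by linarith
    define m where "m = n div (2*k)"
    define r where "r = n mod (2*k)"
    have nmr: "n = 2*k*m + r" by (simp add: m_def r_def)
    have r: "r < 2*k" using k0 by (simp add: r_def)
    define P where "P = card (Ix k d) * ((q - 1) * q ^ (k - 1))"
    define g where "g = card (Aset q (2*k) k d)"
    have gP: "g + P \<le> q^(2*k)" unfolding g_def P_def by (rule bad_count[OF assms(1) assms(2) k0])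
    have an: "a_q q n k d \<le> g^m * q^r"
      unfolding a_q_Aset g_def nmr by (rule card_Aset_blocks[OF k0])
    define p where "p = real P / Q^(2*k)"
    have Qk: "Q^(2*k) > 0" using Q2 by simp
    have gp: "real g \<le> Q^(2*k) * (1 - p)"
    proof -
      have "real (g + P) \<le> real (q^(2*k))" using gP by (simp only: of_nat_le_iff)
      hence "real g + real P \<le> Q^(2*k)" unfolding Q_def by simp
      moreover have "Q^(2*k) * (1 - p) = Q^(2*k) - real P"
        using Qk unfolding p_def by (simp add: right_diff_distrib del: power_eq_0_iff)
      ultimately show ?thesis by linarith
    qed
    have "0 \<le> Q^(2*k) * (1 - p)" using gp of_nat_0_le_iff[of g] by linarith
    hence p0: "0 \<le> 1 - p" using Qk by (simp add: zero_le_mult_iff)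
    have "real (a_q q n k d) \<le> real g ^ m * Q ^ r"
    proof -
      have "real (a_q q n k d) \<le> real (g^m * q^r)" using an by (simp only: of_nat_le_iff)
      thus ?thesis unfolding Q_def by simp
    qed
    also have "\<dots> \<le> (Q^(2*k) * (1 - p)) ^ m * Q^r"
      using gp Q2 by (intro mult_right_mono power_mono) simp_all
    also have "\<dots> = Q^n * (1 - p)^m"
      unfolding nmr by (simp add: power_mult_distrib power_add power_mult)
    also have "\<dots> \<le> Q^n * exp (- p) ^ m"
    proof -
      have "1 - p \<le> exp (-p)" using exp_ge_add_one_self[of "-p"] by simp
      thus ?thesis using p0 Q2 by (intro mult_left_mono power_mono) simp_all
    qed
    also have "\<dots> = Q^n * exp (- (p * real m))" by (simp add: exp_of_nat_mult[symmetric] mult.commute)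
    finally have A1: "real (a_q q n k d) \<le> Q^n * exp (- (p * real m))" .
    define X where "X = C * ((real n - 2 * real k) * real k ^ (d - 1)) / Q ^ k"
    have XlnQ: "X * ln Q = (real n - 2 * real k) * real k ^ (d - 1) / (4 * real d ^ d * Q^k)"
    proof -
      have CL: "C * ln Q = 1 / (4 * real d ^ d)" using lnQ by (simp add: C_def)
      have "X * ln Q = (C * ln Q) * ((real n - 2 * real k) * real k ^ (d - 1)) / Q^k"
        unfolding X_def by (simp add: mult_ac)
      also have "\<dots> = (real n - 2 * real k) * real k ^ (d - 1) / (4 * real d ^ d * Q^k)"
        unfolding CL by simp
      finally show ?thesis .
    qed
    have Pb: "(real k / real d)^d * (Q - 1) * Q^(k-1) \<le> real P"
    proof -
      have b: "(real k / real d)^d \<le> real (k choose d)"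
        using nk binomial_ge_n_over_k_pow_k[of d k] by simp
      have c: "real (k choose d) \<le> real (card (Ix k d))" using card_Ix[OF k0] by simp
      have "(real k / real d)^d * (Q - 1) * Q^(k-1) \<le> real (card (Ix k d)) * (Q - 1) * Q^(k-1)"
        using b c Q2 by (intro mult_right_mono) simp_all
      also have "\<dots> = real P" using assms(1) by (simp add: P_def Q_def of_nat_diff)
      finally show ?thesis .
    qed
    have KM: "real n - 2 * real k \<le> 2 * real k * real m"
    proof -
      have "n \<le> 2*k*m + 2*k" using nmr r by linarith
      hence "real n \<le> real (2*k*m + 2*k)" by (simp only: of_nat_le_iff)
      hence "real n \<le> 2 * real k * real m + 2 * real k" by simp
      thus ?thesis by linarith
    qed
    have ineq0: "(real n - 2 * real k) * real k ^ (d - 1) / (4 * real d ^ d * Q^k) \<le> real P * real m / Q^(2*k)"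
    proof (rule exponent_ineq[OF Q2 _ _ _ KM Pb])
      show "1 \<le> real k" using k0 by simp
      show "0 < real d" using assms(2) by simp
      show "0 \<le> real m" by simp
      show "1 \<le> k" using k0 by simp
      show "1 \<le> d" using assms(2) by simp
    qed
    have ineq: "X * ln Q \<le> p * real m"
      unfolding XlnQ p_def using ineq0 by simp
    have "Q^n * exp (- (p * real m)) \<le> Q^n * exp (- (X * ln Q))"
      using ineq Q2 by simp
    also have "Q^n * exp (- (X * ln Q)) = Q powr (real n - X)"
    proof -
      have "Q powr (real n - X) = exp ((real n - X) * ln Q)" using Q2 by (simp add: powr_def)
      also have "\<dots> = exp (real n * ln Q) * exp (- (X * ln Q))" by (simp add: algebra_simps exp_diff exp_minus field_simps)
      also have "exp (real n * ln Q) = Q ^ n" using Q2 by (simp add: exp_of_nat_mult)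
      finally show ?thesis by simp
    qed
    finally show "real (a_q q n k d)
             \<le> real q powr (real n - C * ((real n - 2 * real k) * real k ^ (d - 1)) / real q ^ k)"
      using A1 unfolding X_def Q_def by linarith
  qed
qed

end
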